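(* Let $X$ be a finite quandle with connected components $C_1,\dots,C_k$, let $s=(x_1,\dots,x_n)\in X^n$, and let $n_j=|\{1\le i\le n:x_i\in C_j\}|$. Suppose $n_j>|C_j|$ for some $1\le j\le k$. Then the image in $S_n$ of the stabilizer of $s$ in $B_n$ is not contained in $A_n$.
   Context: A quandle is a set $X$ with an operation $x^y$ such that $x\mapsto x^y$ is bijective for each $y$, $(z^x)^y=(z^y)^{x^y}$ and $x^x=x$; its connected components are the classes of the smallest equivalence relation with $x\sim x^y$. $B_n$ acts on $X^n$ from the right by $(\dots,x_i,x_{i+1},\dots)^{\sigma_i}=(\dots,x_{i+1},x_i^{x_{i+1}},\dots)$, and $B_n\to S_n$ sends $\sigma_i\mapsto(i\ i+1)$. *)

theory Defs
  imports "HOL-Combinatorics.Combinatorics"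
begin

text \<open>A quandle on carrier X with operation qop x y = x^y.\<close>
definition quandle :: "'a set \<Rightarrow> ('a \<Rightarrow> 'a \<Rightarrow> 'a) \<Rightarrow> bool" where
  "quandle X qop \<longleftrightarrow>
     (\<forall>y\<in>X. bij_betw (\<lambda>x. qop x y) X X) \<and>
     (\<forall>x\<in>X. \<forall>y\<in>X. \<forall>z\<in>X. qop (qop z x) y = qop (qop z y) (qop x y)) \<and>
     (\<forall>x\<in>X. qop x x = x)"

definition qstep :: "'a set \<Rightarrow> ('a \<Rightarrow> 'a \<Rightarrow> 'a) \<Rightarrow> ('a \<times> 'a) set" where
  "qstep X qop = {(x, qop x y) | x y. x \<in> X \<and> y \<in> X}"

definition qconn :: "'a set \<Rightarrow> ('a \<Rightarrow> 'a \<Rightarrow> 'a) \<Rightarrow> ('a \<times> 'a) set" where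
  "qconn X qop = Id_on X \<union> (qstep X qop \<union> (qstep X qop)\<inverse>)\<^sup>+"

definition components :: "'a set \<Rightarrow> ('a \<Rightarrow> 'a \<Rightarrow> 'a) \<Rightarrow> 'a set set" where
  "components X qop = X // qconn X qop"

text \<open>Braid group generators: BGen i True = sigma_i, BGen i False = sigma_i^-1
  (positions are 0-based: sigma_i acts on positions i and i+1).
  Elements of B_n are represented by words in these generators.\<close>
datatype bgen = BGen nat bool

definition valid_word :: "nat \<Rightarrow> bgen list \<Rightarrow> bool" where
  "valid_word n w \<longleftrightarrow> (\<forall>g\<in>set w. case g of BGen i _ \<Rightarrow> Suc i < n)"

fun gen_act :: "'a set \<Rightarrow> ('a \<Rightarrow> 'a \<Rightarrow> 'a) \<Rightarrow> 'a list \<Rightarrow> bgen \<Rightarrow> 'a list" where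
  "gen_act X qop s (BGen i True) =
     s[i := s ! Suc i, Suc i := qop (s ! i) (s ! Suc i)]"
| "gen_act X qop s (BGen i False) =
     s[i := inv_into X (\<lambda>z. qop z (s ! i)) (s ! Suc i), Suc i := s ! i]"

fun word_act :: "'a set \<Rightarrow> ('a \<Rightarrow> 'a \<Rightarrow> 'a) \<Rightarrow> 'a list \<Rightarrow> bgen list \<Rightarrow> 'a list" where
  "word_act X qop s [] = s"
| "word_act X qop s (g # w) = word_act X qop (gen_act X qop s g) w"

fun word_perm :: "bgen list \<Rightarrow> nat \<Rightarrow> nat" where
  "word_perm [] = id"
| "word_perm (BGen i _ # w) = transpose i (Suc i) \<circ> word_perm w"

definition stab_image :: "'a set \<Rightarrow> ('a \<Rightarrow> 'a \<Rightarrow> 'a) \<Rightarrow> nat \<Rightarrow> 'a list \<Rightarrow> (nat \<Rightarrow> nat) set" where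
  "stab_image X qop n s =
     {word_perm w | w. valid_word n w \<and> word_act X qop s w = s}"

definition alternating :: "nat \<Rightarrow> (nat \<Rightarrow> nat) set" where
  "alternating n = {p. p permutes {..<n} \<and> evenperm p}"

end

theory Submission
  imports Defs
begin

lemma word_perm_parity:
  "permutation (word_perm w) \<and> evenperm (word_perm w) = even (length w)"
proof (induction w)
  case Nil
  then show ?case by (simp add: evenperm_id)
next
  case (Cons g w)
  obtain i b where g: "g = BGen i b" by (cases g)
  have e: "word_perm (g # w) = transpose i (Suc i) \<circ> word_perm w" by (simp only: g word_perm.simps)
  have p1: "permutation (word_perm (g # w))" unfolding e
    by (rule permutation_compose[OF permutation_swap_id conjunct1[OF Cons.IH]])
  have "evenperm (word_perm (g # w)) = (evenperm (transpose i (Suc i)) = evenperm (word_perm w))"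
    unfolding e by (rule evenperm_comp[OF permutation_swap_id conjunct1[OF Cons.IH]])
  then show ?case using p1 Cons.IH evenperm_swap[of i "Suc i"] by simp
qed

lemma word_act_append:
  "word_act X qop t (w @ w') = word_act X qop (word_act X qop t w) w'"
  by (induction w arbitrary: t) auto

lemma qop_closed:
  assumes "quandle X qop" "x \<in> X" "y \<in> X" shows "qop x y \<in> X"
  using assms unfolding quandle_def bij_betw_def by blast

definition Lw :: "nat \<Rightarrow> nat \<Rightarrow> bgen list" where
  "Lw p m = map (\<lambda>k. BGen (p + k) True) (rev [0..<m])"

lemma Lw_Suc: "Lw p (Suc m) = BGen (p + m) True # Lw p m"
  by (simp add: Lw_def)

lemma gen_true_props:
  assumes "quandle X qop" "set t \<subseteq> X" "Suc i < length t"
  shows "length (gen_act X qop t (BGen i True)) = length t"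
    and "set (gen_act X qop t (BGen i True)) \<subseteq> X"
    and "gen_act X qop (gen_act X qop t (BGen i True)) (BGen i False) = t"
proof -
  have ti: "t ! i \<in> X" and ts: "t ! Suc i \<in> X" using assms by auto
  have q: "qop (t ! i) (t ! Suc i) \<in> X" using qop_closed[OF assms(1) ti ts] .
  show "length (gen_act X qop t (BGen i True)) = length t" by simp
  show "set (gen_act X qop t (BGen i True)) \<subseteq> X"
    using assms q ts by (auto dest!: set_update_subset_insert[THEN subsetD])
  have bij: "bij_betw (\<lambda>z. qop z (t ! Suc i)) X X"
    using assms(1) ts unfolding quandle_def by blast
  have inv: "inv_into X (\<lambda>z. qop z (t ! Suc i)) (qop (t ! i) (t ! Suc i)) = t ! i"
    using bij ti by (metis bij_betw_def inv_into_f_f)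
  show "gen_act X qop (gen_act X qop t (BGen i True)) (BGen i False) = t"
  proof (rule nth_equalityI)
    show "length (gen_act X qop (gen_act X qop t (BGen i True)) (BGen i False)) = length t" by simp
    fix q assume "q < length (gen_act X qop (gen_act X qop t (BGen i True)) (BGen i False))"
    then show "gen_act X qop (gen_act X qop t (BGen i True)) (BGen i False) ! q = t ! q"
      using assms(3) inv by (auto simp add: nth_list_update)
  qed
qed

lemma Lw_props:
  assumes "quandle X qop" "set t \<subseteq> X" "p + m < length t"
  shows "length (word_act X qop t (Lw p m)) = length t
    \<and> set (word_act X qop t (Lw p m)) \<subseteq> X
    \<and> word_act X qop t (Lw p m) ! p = t ! (p + m)
    \<and> (\<forall>q<p. word_act X qop t (Lw p m) ! q = t ! q)"
  using assms(2,3)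
proof (induction m arbitrary: t)
  case 0
  then show ?case by (simp add: Lw_def)
next
  case (Suc m)
  let ?t' = "gen_act X qop t (BGen (p + m) True)"
  have l: "length ?t' = length t" and st: "set ?t' \<subseteq> X"
    using gen_true_props[OF assms(1) Suc.prems(1)] Suc.prems(2) by auto
  have IH: "length (word_act X qop ?t' (Lw p m)) = length ?t'
    \<and> set (word_act X qop ?t' (Lw p m)) \<subseteq> X
    \<and> word_act X qop ?t' (Lw p m) ! p = ?t' ! (p + m)
    \<and> (\<forall>q<p. word_act X qop ?t' (Lw p m) ! q = ?t' ! q)"
    using Suc.IH[OF st] l Suc.prems(2) by simp
  have a: "?t' ! (p + m) = t ! (p + Suc m)" using Suc.prems(2) by (simp add: nth_list_update)
  have b: "\<forall>q<p. ?t' ! q = t ! q" using Suc.prems(2) by (simp add: nth_list_update)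
  show ?case using IH l a b by (simp add: Lw_Suc)
qed

definition flipw :: "bgen list \<Rightarrow> bgen list" where
  "flipw w = rev (map (\<lambda>g. case g of BGen i b \<Rightarrow> BGen i (\<not> b)) w)"

lemma undo:
  assumes "quandle X qop" "set t \<subseteq> X"
    "\<forall>g\<in>set w. \<exists>k. g = BGen k True \<and> Suc k < length t"
  shows "word_act X qop (word_act X qop t w) (flipw w) = t"
  using assms(2,3)
proof (induction w arbitrary: t)
  case Nil
  then show ?case by (simp add: flipw_def)
next
  case (Cons g w)
  obtain k where g: "g = BGen k True" and k: "Suc k < length t" using Cons.prems by auto
  let ?t' = "gen_act X qop t (BGen k True)"
  have P: "length ?t' = length t" "set ?t' \<subseteq> X" "gen_act X qop ?t' (BGen k False) = t"
    using gen_true_props[OF assms(1) Cons.prems(1) k] by auto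
  have "flipw (g # w) = flipw w @ [BGen k False]" by (simp add: flipw_def g)
  then have "word_act X qop (word_act X qop t (g # w)) (flipw (g # w))
     = gen_act X qop (word_act X qop (word_act X qop ?t' w) (flipw w)) (BGen k False)"
    by (simp add: word_act_append g)
  also have "\<dots> = gen_act X qop ?t' (BGen k False)"
    using Cons.IH[OF P(2)] Cons.prems(2) P(1) by simp
  finally show ?case using P(3) by simp
qed

lemma components_sub:
  assumes "quandle X qop" "C \<in> components X qop" shows "C \<subseteq> X"
proof -
  have "qstep X qop \<subseteq> X \<times> X" using qop_closed[OF assms(1)] unfolding qstep_def by blast
  then have "qstep X qop \<union> (qstep X qop)\<inverse> \<subseteq> X \<times> X" by blast
  then have "(qstep X qop \<union> (qstep X qop)\<inverse>)\<^sup>+ \<subseteq> X \<times> X"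
    using trancl_subset_Sigma by blast
  then have "qconn X qop \<subseteq> X \<times> X" unfolding qconn_def by auto
  then show ?thesis using assms(2) unfolding components_def quotient_def by blast
qed

theorem corollary4p36:
  fixes X :: "'a set" and qop :: "'a \<Rightarrow> 'a \<Rightarrow> 'a" and s :: "'a list" and n :: nat
  assumes "quandle X qop" and "finite X"
    and "length s = n" and "set s \<subseteq> X"
    and "\<exists>C \<in> components X qop. card {i. i < n \<and> s ! i \<in> C} > card C"
  shows "\<not> stab_image X qop n s \<subseteq> alternating n"
proof -
  obtain C where C: "C \<in> components X qop" and cC: "card {i. i < n \<and> s ! i \<in> C} > card C"
    using assms(5) by blast
  let ?S = "{i. i < n \<and> s ! i \<in> C}"
  have fC: "finite C" using components_sub[OF assms(1) C] assms(2) finite_subset by blast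
  have "(\<lambda>i. s ! i) ` ?S \<subseteq> C" by auto
  then have "card ((\<lambda>i. s ! i) ` ?S) \<le> card C" using fC card_mono by blast
  then have "\<not> inj_on (\<lambda>i. s ! i) ?S" using cC card_image by fastforce
  then obtain i j where ij: "i < j" "j < n" "s ! i = s ! j"
    unfolding inj_on_def by (metis (no_types, lifting) mem_Collect_eq nat_neq_iff)
  define m where "m = j - Suc i"
  have jm: "Suc i + m = j" using ij m_def by simp
  define L where "L = Lw (Suc i) m"
  define W where "W = L @ [BGen i True] @ flipw L"
  let ?s' = "word_act X qop s L"
  have LP: "length ?s' = n" "set ?s' \<subseteq> X" "?s' ! Suc i = s ! j" "?s' ! i = s ! i"
    using Lw_props[OF assms(1) assms(4), of "Suc i" m] jm ij assms(3)
    unfolding L_def by auto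
  have x: "s ! j \<in> X" using ij assms(3,4) by auto
  have fx: "gen_act X qop ?s' (BGen i True) = ?s'"
  proof (rule nth_equalityI)
    show "length (gen_act X qop ?s' (BGen i True)) = length ?s'" by simp
    have xx: "qop (s ! j) (s ! j) = s ! j" using x assms(1) unfolding quandle_def by blast
    fix q assume "q < length (gen_act X qop ?s' (BGen i True))"
    then show "gen_act X qop ?s' (BGen i True) ! q = ?s' ! q"
      using LP ij xx by (auto simp add: nth_list_update)
  qed
  have Lset: "\<forall>g\<in>set L. \<exists>k. g = BGen k True \<and> Suc k < length s"
    using jm ij assms(3) unfolding L_def Lw_def by auto
  have act: "word_act X qop s W = s"
    unfolding W_def using fx undo[OF assms(1) assms(4) Lset] by (simp only: word_act_append word_act.simps)
  have valid: "valid_word n W"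
    using Lset ij assms(3) unfolding W_def valid_word_def flipw_def by auto
  have "word_perm W \<in> stab_image X qop n s"
    unfolding stab_image_def using act valid by blast
  moreover have "length W = Suc (2 * length L)" unfolding W_def flipw_def by simp
  then have "\<not> evenperm (word_perm W)" using word_perm_parity[of W] by simp
  ultimately show ?thesis unfolding alternating_def by blast
qed

end
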